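(* Let $G_1,G_2$ be induced subgraphs of a graph $G$ with $V(G)=V(G_1)\cup V(G_2)$ and $E(G)=E(G_1)\cup E(G_2)$, let $S$ be the subgraph induced by $V(G_1)\cap V(G_2)$, suppose $G-V(S)$ is disconnected and $S$ contains a nonedge $e=xy$. Suppose: (1) $G_2\cup e$ is an atom; (2) $G_1$ or $G_1\cup e$ is an atom; (3) $G_1-A$ is connected for every clique $A\subseteq V(S)$; (4) for every clique $A\subseteq V(S)$ with $x,y\notin A$, the vertices $x$ and $y$ lie in the same connected component of $G_2-A$. Then $G$ is an atom.
   Context: A clique is a set of pairwise adjacent vertices (possibly empty). A clique separator of a graph $H$ is a clique $U$ such that $H-U$ has at least two connected components. A graph is an atom if it is nonempty and has no clique separator. $H\cup e$ denotes $H$ with $e$ added as an edge. *)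

theory Defs
  imports Main
begin

definition sgraph :: "'a set \<Rightarrow> 'a set set \<Rightarrow> bool" where
  "sgraph V E \<longleftrightarrow> finite V \<and> (\<forall>e\<in>E. e \<subseteq> V \<and> card e = 2)"

definition induced :: "'a set set \<Rightarrow> 'a set \<Rightarrow> 'a set set" where
  "induced E W = {e\<in>E. e \<subseteq> W}"

text \<open>Edge set after deleting the vertex set U (vertex set becomes V - U).\<close>
definition del_edges :: "'a set set \<Rightarrow> 'a set \<Rightarrow> 'a set set" where
  "del_edges E U = {e\<in>E. e \<inter> U = {}}"

definition reach :: "'a set \<Rightarrow> 'a set set \<Rightarrow> 'a \<Rightarrow> 'a \<Rightarrow> bool" where
  "reach V E u v \<longleftrightarrow> u \<in> V \<and> v \<in> V \<and>
     (\<lambda>a b. a \<in> V \<and> b \<in> V \<and> {a, b} \<in> E)\<^sup>*\<^sup>* u v"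

definition connected_graph :: "'a set \<Rightarrow> 'a set set \<Rightarrow> bool" where
  "connected_graph V E \<longleftrightarrow> V \<noteq> {} \<and> (\<forall>u\<in>V. \<forall>v\<in>V. reach V E u v)"

definition two_components :: "'a set \<Rightarrow> 'a set set \<Rightarrow> bool" where
  "two_components V E \<longleftrightarrow> (\<exists>u\<in>V. \<exists>v\<in>V. \<not> reach V E u v)"

definition clique :: "'a set \<Rightarrow> 'a set set \<Rightarrow> 'a set \<Rightarrow> bool" where
  "clique V E U \<longleftrightarrow> U \<subseteq> V \<and> (\<forall>u\<in>U. \<forall>v\<in>U. u \<noteq> v \<longrightarrow> {u, v} \<in> E)"

definition clique_separator :: "'a set \<Rightarrow> 'a set set \<Rightarrow> 'a set \<Rightarrow> bool" where
  "clique_separator V E U \<longleftrightarrow> clique V E U \<and> two_components (V - U) (del_edges E U)"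

definition atom :: "'a set \<Rightarrow> 'a set set \<Rightarrow> bool" where
  "atom V E \<longleftrightarrow> V \<noteq> {} \<and> \<not> (\<exists>U. clique_separator V E U)"

end

theory Submission
  imports Defs
begin

lemma reach_edge: "a \<in> W \<Longrightarrow> b \<in> W \<Longrightarrow> {a,b} \<in> F \<Longrightarrow> reach W F a b"
  unfolding reach_def by auto

lemma reach_trans: "reach W F a b \<Longrightarrow> reach W F b c \<Longrightarrow> reach W F a c"
  unfolding reach_def using rtranclp_trans[of _ a b c] by blast

lemma reach_sym: "reach W F u v \<Longrightarrow> reach W F v u"
proof -
  assume r: "reach W F u v"
  let ?P = "\<lambda>a b. a \<in> W \<and> b \<in> W \<and> {a, b} \<in> F"
  have "?P\<^sup>*\<^sup>* u v" using r unfolding reach_def by blast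
  then have "?P\<^sup>*\<^sup>* v u"
  proof (induction rule: rtranclp_induct)
    case base then show ?case by simp
  next
    case (step b c)
    then have "?P c b" by (simp add: insert_commute)
    then show ?case using step.IH by (rule converse_rtranclp_into_rtranclp)
  qed
  then show ?thesis using r unfolding reach_def by blast
qed

lemma reach_lift:
  assumes r: "reach W F u v" and u: "u \<in> W'"
    and h: "\<And>a b. a \<in> W \<Longrightarrow> b \<in> W \<Longrightarrow> {a,b} \<in> F \<Longrightarrow> reach W' F' a b"
  shows "reach W' F' u v"
proof -
  let ?P = "\<lambda>a b. a \<in> W \<and> b \<in> W \<and> {a, b} \<in> F"
  have "?P\<^sup>*\<^sup>* u v" using r unfolding reach_def by blast
  then show ?thesis
  proof (induction rule: rtranclp_induct)
    case base then show ?case using u unfolding reach_def by simp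
  next
    case (step b c)
    have "reach W' F' b c" using step.hyps(2) by (intro h) auto
    then show ?case using step.IH by (rule reach_trans[rotated])
  qed
qed

theorem mainTheorem18:
  fixes V V1 V2 :: "'a set" and E :: "'a set set" and x y :: 'a
  assumes G: "sgraph V E"
    and V1: "V1 \<subseteq> V" and V2: "V2 \<subseteq> V"
    and cover_V: "V = V1 \<union> V2"
    and cover_E: "E = induced E V1 \<union> induced E V2"
    and disc: "two_components (V - (V1 \<inter> V2)) (del_edges E (V1 \<inter> V2))"
    and x: "x \<in> V1 \<inter> V2" and y: "y \<in> V1 \<inter> V2" and xy: "x \<noteq> y"
    and nonedge: "{x, y} \<notin> E"
    and h1: "atom V2 (insert {x, y} (induced E V2))"
    and h2: "atom V1 (induced E V1) \<or> atom V1 (insert {x, y} (induced E V1))"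
    and h3: "\<forall>A. clique (V1 \<inter> V2) (induced E (V1 \<inter> V2)) A \<longrightarrow>
               connected_graph (V1 - A) (del_edges (induced E V1) A)"
    and h4: "\<forall>A. clique (V1 \<inter> V2) (induced E (V1 \<inter> V2)) A \<longrightarrow> x \<notin> A \<longrightarrow> y \<notin> A \<longrightarrow>
               reach (V2 - A) (del_edges (induced E V2) A) x y"
  shows "atom V E"
  unfolding atom_def
proof
  show "V \<noteq> {}" using x cover_V by auto
  show "\<not> (\<exists>U. clique_separator V E U)"
  proof
    assume "\<exists>U. clique_separator V E U"
    then obtain U where cs: "clique_separator V E U" by blast
    hence cl: "clique V E U" and tc: "two_components (V-U) (del_edges E U)"
      by (auto simp: clique_separator_def)
    let ?R = "reach (V-U) (del_edges E U)"
    have Esub: "\<forall>e\<in>E. e \<subseteq> V1 \<or> e \<subseteq> V2"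
    proof
      fix e assume "e \<in> E"
      moreover have "E \<subseteq> induced E V1 \<union> induced E V2" using cover_E by (rule equalityD1)
      ultimately have "e \<in> induced E V1 \<union> induced E V2" by (rule subsetD[rotated])
      thus "e \<subseteq> V1 \<or> e \<subseteq> V2" by (auto simp: induced_def)
    qed
    have notboth: "x \<notin> U \<or> y \<notin> U" using cl nonedge xy by (auto simp: clique_def)
    have side: "U \<subseteq> V1 \<or> U \<subseteq> V2"
    proof (rule ccontr)
      assume "\<not> ?thesis"
      then obtain u w where uw: "u\<in>U" "u\<notin>V1" "w\<in>U" "w \<notin> V2" by auto
      then have "u\<noteq>w" "u \<in> V2" "w \<in> V1" using cl cover_V by (auto simp: clique_def)
      then have "{u,w} \<in> E" using cl uw by (auto simp: clique_def)
      then have "{u,w} \<subseteq> V1 \<or> {u,w} \<subseteq> V2" using Esub by blast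
      then show False using uw by simp
    qed
    have cliqueA: "clique (V1 \<inter> V2) (induced E (V1 \<inter> V2)) (U \<inter> V1 \<inter> V2)"
      using cl by (auto simp: clique_def induced_def)
    have Rxy: "?R x y" if xU: "x \<notin> U" and yU: "y \<notin> U"
      using side
    proof
      assume UV1: "U \<subseteq> V1"
      have eqA: "U \<inter> V1 \<inter> V2 = U \<inter> V2" using UV1 by auto
      have "reach (V2 - (U \<inter> V2)) (del_edges (induced E V2) (U \<inter> V2)) x y"
        using h4 cliqueA xU yU eqA by auto
      then show ?thesis
      proof (rule reach_lift)
        show "x \<in> V - U" using x xU cover_V by auto
        fix a b assume "a \<in> V2 - U \<inter> V2" "b \<in> V2 - U \<inter> V2"
          "{a, b} \<in> del_edges (induced E V2) (U \<inter> V2)"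
        then show "?R a b" using V2
          by (intro reach_edge) (auto simp: del_edges_def induced_def)
      qed
    next
      assume UV2: "U \<subseteq> V2"
      have eqA: "U \<inter> V1 \<inter> V2 = U \<inter> V1" using UV2 by auto
      have "connected_graph (V1 - (U \<inter> V1)) (del_edges (induced E V1) (U \<inter> V1))"
        using h3 cliqueA eqA by auto
      then have "reach (V1 - (U \<inter> V1)) (del_edges (induced E V1) (U \<inter> V1)) x y"
        using x y xU yU unfolding connected_graph_def by auto
      then show ?thesis
      proof (rule reach_lift)
        show "x \<in> V - U" using x xU cover_V by auto
        fix a b assume "a \<in> V1 - U \<inter> V1" "b \<in> V1 - U \<inter> V1"
          "{a, b} \<in> del_edges (induced E V1) (U \<inter> V1)"
        then show "?R a b" using V1
          by (intro reach_edge) (auto simp: del_edges_def induced_def)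
      qed
    qed
    have allW: "?R u v" if WV: "W \<subseteq> V" and at: "atom W F" and F1: "induced E W \<subseteq> F"
      and F2: "F \<subseteq> insert {x,y} (induced E W)" and u: "u \<in> W - U" and v: "v \<in> W - U"
    for W F u v
    proof -
      have "clique W F (U \<inter> W)" using cl F1 by (auto simp: clique_def induced_def)
      then have "\<not> two_components (W - U \<inter> W) (del_edges F (U \<inter> W))"
        using at unfolding atom_def clique_separator_def by blast
      then have "reach (W - U \<inter> W) (del_edges F (U \<inter> W)) u v"
        using u v unfolding two_components_def by blast
      then show ?thesis
      proof (rule reach_lift)
        show "u \<in> V - U" using u WV by auto
        fix a b assume ab: "a \<in> W - U \<inter> W" "b \<in> W - U \<inter> W"
          "{a, b} \<in> del_edges F (U \<inter> W)"
        then have "{a,b} \<in> F" by (auto simp: del_edges_def)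
        then have "{a,b} \<in> insert {x,y} (induced E W)" by (rule subsetD[OF F2])
        then have "{a,b} = {x,y} \<or> {a,b} \<in> induced E W" by (simp only: insert_iff)
        then show "?R a b"
        proof
          assume e: "{a,b} = {x,y}"
          then have "x \<notin> U" "y \<notin> U" using ab by auto
          then have Rx: "?R x y" by (rule Rxy)
          have "(a = x \<and> b = y) \<or> (a = y \<and> b = x)" using e by (simp add: doubleton_eq_iff)
          then show ?thesis
          proof (elim disjE conjE)
            assume "a = x" "b = y" then show ?thesis using Rx by simp
          next
            assume "a = y" "b = x" then show ?thesis using reach_sym[OF Rx] by simp
          qed
        next
          assume "{a,b} \<in> induced E W"
          then show ?thesis using ab WV
            by (intro reach_edge) (auto simp: del_edges_def induced_def)
        qed
      qed
    qed
    have R1: "?R u v" if "u \<in> V1 - U" "v \<in> V1 - U" for u v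
      using h2
    proof
      assume "atom V1 (induced E V1)"
      then show ?thesis by (rule allW[OF V1 _ _ _ that]) auto
    next
      assume "atom V1 (insert {x, y} (induced E V1))"
      then show ?thesis by (rule allW[OF V1 _ _ _ that]) auto
    qed
    have R2: "?R u v" if "u \<in> V2 - U" "v \<in> V2 - U" for u v
      by (rule allW[OF V2 h1 _ _ that]) auto
    obtain z where z: "z \<in> V1 \<inter> V2" "z \<notin> U" using notboth x y by blast
    have Rz: "?R u z" if "u \<in> V - U" for u
    proof -
      have "u \<in> V1 - U \<or> u \<in> V2 - U" using that cover_V by auto
      then show ?thesis
      proof
        assume "u \<in> V1 - U" then show ?thesis using z by (intro R1) auto
      next
        assume "u \<in> V2 - U" then show ?thesis using z by (intro R2) auto
      qed
    qed
    have "\<forall>u\<in>V-U. \<forall>v\<in>V-U. ?R u v"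
    proof (intro ballI)
      fix u v assume uv: "u \<in> V - U" "v \<in> V - U"
      show "?R u v" by (rule reach_trans[OF Rz[OF uv(1)] reach_sym[OF Rz[OF uv(2)]]])
    qed
    then show False using tc unfolding two_components_def by blast
  qed
qed

end
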